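(* Let $k \in \mathbb{N}$. Every linear $k$-DCFG is equivalent to (i.e. generates the same language as) some $k$-DCFG $G = \langle N, \Sigma, P, S\rangle$ all of whose rules have one of the following forms, where $A, B \in N$ and $u \in \Theta$: (1) $A \to u\cdot B$ or $A \to B \cdot u$, with $|u| \leq 1$ and $u \neq \epsilon$; (2) $A \to B \odot_j u$, with $|u| \leq 1$; (3) $A \to u$, with $|u| \leq 1$.
   Context: Fix a finite alphabet $\Sigma$; $\Sigma^*$ is the set of words over $\Sigma$ and $\epsilon$ the empty word. $\Theta_k$ is the set of tuples $(u_0,\ldots,u_k)$ with $u_i\in\Sigma^*$, and $\Theta=\bigcup_{k\in\mathbb{N}}\Theta_k$; the rank of $(u_0,\ldots,u_k)$ is $k$, and its length $|u|$ is the sum of the lengths of its components. Rank-$0$ tuples are identified with words; in particular $\epsilon$ also denotes the rank-$0$ tuple $(\epsilon)$. Concatenation $\cdot:\Theta_i\times\Theta_j\to\Theta_{i+j}$ is $(x_0,\ldots,x_i)\cdot(y_0,\ldots,y_j)=(x_0,\ldots,x_{i-1},x_iy_0,y_1,\ldots,y_j)$, and for $1\le l\le i$ intercalation $\odot_l:\Theta_i\times\Theta_j\to\Theta_{i+j-1}$ is $(x_0,\ldots,x_i)\odot_l(y_0,\ldots,y_j)=(x_0,\ldots,x_{l-2},x_{l-1}y_0,y_1,\ldots,y_{j-1},y_jx_l,x_{l+1},\ldots,x_i)$. Let $N$ be a finite set of nonterminals disjoint from $\Sigma$ with a rank function $\mathrm{rk}:N\to\mathbb{N}$. The set of $k$-correct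 terms $\mathrm{Tm}_k(N,\Sigma)$ and their ranks are defined inductively: every tuple in $\Theta_j$ with $j\le k$ is a term of rank $j$, and every nonterminal $A$ with $\mathrm{rk}(A)\le k$ is a term of rank $\mathrm{rk}(A)$; if $\alpha,\beta$ are terms with $\mathrm{rk}\,\alpha+\mathrm{rk}\,\beta\le k$ then $(\alpha\cdot\beta)$ is a term of rank $\mathrm{rk}\,\alpha+\mathrm{rk}\,\beta$; if $1\le j\le k$, $\mathrm{rk}\,\alpha\ge j$ and $\mathrm{rk}\,\alpha+\mathrm{rk}\,\beta\le k+1$ then $(\alpha\odot_j\beta)$ is a term of rank $\mathrm{rk}\,\alpha+\mathrm{rk}\,\beta-1$. A ground term is one containing no nonterminals; its value $\nu(\alpha)\in\Theta$ is obtained by interpreting $\cdot$ and $\odot_j$ as the operations above. A context $C[x]$ is a term with one leaf occurrence of a variable $x$ of some rank; $C[\beta]$ is the result of substituting a term $\beta$ of the same rank for $x$. A $k$-displacement context-free grammar ($k$-DCFG) is $G=\langle N,\Sigma,P,S\rangle$ where $S\in N$ has rank $0$ and $P$ is a finite set of rules $A\to\alpha$ with $A\in N$, $\alpha\in\mathrm{Tm}_k(N,\Sigma)$ and $\mathrm{rk}(A)=\mathrm{rk}(\alpha)$. Standing assumption: all tuples occurring as leaves of right-hand sides of rules have length at most $1$. Derivability $\vdash_G$ is the smallest reflexive transitive relation between nonterminals and terms such that $(B\to\beta)\in P$ and $A\vdash_G C[B]$ imply $A\vdash_G C[\beta]$ for any context $C$. $L_G(A)=\{\nu(\alpha)\mid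 A\vdash_G\alpha,\ \alpha \text{ ground}\}$ and $L(G)=L_G(S)$. Two grammars are equivalent if they generate the same language. A term is linear if it contains at most one occurrence of a nonterminal; a grammar is linear if the right-hand sides of all its rules are linear. All right-hand sides in the claim are required to be $k$-correct terms of the same rank as the left-hand side. *)

theory Defs
  imports Main
begin

text \<open>Tuples (u_0,...,u_k) are nonempty lists of words; rank = length - 1.\<close>
type_synonym 't tuple = "'t list list"

definition tup_rank :: "'t tuple \<Rightarrow> nat" where
  "tup_rank u = length u - 1"

definition tup_len :: "'t tuple \<Rightarrow> nat" where
  "tup_len u = sum_list (map length u)"

definition tconc :: "'t tuple \<Rightarrow> 't tuple \<Rightarrow> 't tuple" where
  "tconc x y = butlast x @ [last x @ hd y] @ tl y"

text \<open>Intercalation at position l (1 \<le> l \<le> i):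
  (x_0..x_{l-2}, x_{l-1} y_0, y_1..y_{j-1}, y_j x_l, x_{l+1}..x_i),
  which equals ((x_0..x_{l-1}) . y) . (x_l..x_i).\<close>
definition tinterc :: "nat \<Rightarrow> 't tuple \<Rightarrow> 't tuple \<Rightarrow> 't tuple" where
  "tinterc l x y = tconc (tconc (take l x) y) (drop l x)"

datatype ('n, 't) tm =
    Tup "'t tuple"
  | NT 'n
  | Conc "('n, 't) tm" "('n, 't) tm"
  | Interc nat "('n, 't) tm" "('n, 't) tm"

fun trank :: "('n \<Rightarrow> nat) \<Rightarrow> ('n, 't) tm \<Rightarrow> nat" where
  "trank rk (Tup u) = tup_rank u"
| "trank rk (NT A) = rk A"
| "trank rk (Conc a b) = trank rk a + trank rk b"
| "trank rk (Interc j a b) = trank rk a + trank rk b - 1"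

fun kcorrect :: "nat \<Rightarrow> ('n \<Rightarrow> nat) \<Rightarrow> ('n, 't) tm \<Rightarrow> bool" where
  "kcorrect k rk (Tup u) = (u \<noteq> [] \<and> tup_rank u \<le> k)"
| "kcorrect k rk (NT A) = (rk A \<le> k)"
| "kcorrect k rk (Conc a b) =
     (kcorrect k rk a \<and> kcorrect k rk b \<and> trank rk a + trank rk b \<le> k)"
| "kcorrect k rk (Interc j a b) =
     (kcorrect k rk a \<and> kcorrect k rk b \<and> 1 \<le> j \<and> j \<le> k \<and>
      j \<le> trank rk a \<and> trank rk a + trank rk b \<le> k + 1)"

fun nts :: "('n, 't) tm \<Rightarrow> 'n list" where
  "nts (Tup u) = []"
| "nts (NT A) = [A]"
| "nts (Conc a b) = nts a @ nts b"
| "nts (Interc j a b) = nts a @ nts b"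

fun leaf_tuples :: "('n, 't) tm \<Rightarrow> 't tuple list" where
  "leaf_tuples (Tup u) = [u]"
| "leaf_tuples (NT A) = []"
| "leaf_tuples (Conc a b) = leaf_tuples a @ leaf_tuples b"
| "leaf_tuples (Interc j a b) = leaf_tuples a @ leaf_tuples b"

definition ground :: "('n, 't) tm \<Rightarrow> bool" where
  "ground t \<longleftrightarrow> nts t = []"

text \<open>Value of a ground term (meaningless on nonterminal leaves).\<close>
fun val :: "('n, 't) tm \<Rightarrow> 't tuple" where
  "val (Tup u) = u"
| "val (NT A) = undefined"
| "val (Conc a b) = tconc (val a) (val b)"
| "val (Interc j a b) = tinterc j (val a) (val b)"

record ('n, 't) dcfg =
  Nts :: "'n set"
  rk :: "'n \<Rightarrow> nat"
  Rules :: "('n \<times> ('n, 't) tm) set"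
  Start :: 'n

text \<open>k-DCFG, including the standing assumption on leaf tuples.\<close>
definition is_kDCFG :: "nat \<Rightarrow> ('n, 't) dcfg \<Rightarrow> bool" where
  "is_kDCFG k G \<longleftrightarrow>
     finite (Nts G) \<and> Start G \<in> Nts G \<and> rk G (Start G) = 0 \<and> finite (Rules G) \<and>
     (\<forall>(A, \<alpha>) \<in> Rules G.
        A \<in> Nts G \<and> set (nts \<alpha>) \<subseteq> Nts G \<and> kcorrect k (rk G) \<alpha> \<and>
        rk G A = trank (rk G) \<alpha> \<and>
        (\<forall>u \<in> set (leaf_tuples \<alpha>). tup_len u \<le> 1))"

inductive dstep :: "('n, 't) dcfg \<Rightarrow> ('n, 't) tm \<Rightarrow> ('n, 't) tm \<Rightarrow> bool"
  for G where
  rule: "(B, \<beta>) \<in> Rules G \<Longrightarrow> dstep G (NT B) \<beta>"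
| conc1: "dstep G a a' \<Longrightarrow> dstep G (Conc a b) (Conc a' b)"
| conc2: "dstep G b b' \<Longrightarrow> dstep G (Conc a b) (Conc a b')"
| interc1: "dstep G a a' \<Longrightarrow> dstep G (Interc j a b) (Interc j a' b)"
| interc2: "dstep G b b' \<Longrightarrow> dstep G (Interc j a b) (Interc j a b')"

definition derives :: "('n, 't) dcfg \<Rightarrow> 'n \<Rightarrow> ('n, 't) tm \<Rightarrow> bool" where
  "derives G A \<alpha> \<longleftrightarrow> (dstep G)\<^sup>*\<^sup>* (NT A) \<alpha>"

definition LG :: "('n, 't) dcfg \<Rightarrow> 'n \<Rightarrow> 't tuple set" where
  "LG G A = {val \<alpha> | \<alpha>. derives G A \<alpha> \<and> ground \<alpha>}"

definition lang :: "('n, 't) dcfg \<Rightarrow> 't tuple set" where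
  "lang G = LG G (Start G)"

definition linear_grammar :: "('n, 't) dcfg \<Rightarrow> bool" where
  "linear_grammar G \<longleftrightarrow> (\<forall>(A, \<alpha>) \<in> Rules G. length (nts \<alpha>) \<le> 1)"

text \<open>epsilon as rank-0 tuple is [[]].\<close>
definition normal_rule :: "('n, 't) tm \<Rightarrow> bool" where
  "normal_rule \<alpha> \<longleftrightarrow>
     (\<exists>u B. \<alpha> = Conc (Tup u) (NT B) \<and> tup_len u \<le> 1 \<and> u \<noteq> [[]]) \<or>
     (\<exists>u B. \<alpha> = Conc (NT B) (Tup u) \<and> tup_len u \<le> 1 \<and> u \<noteq> [[]]) \<or>
     (\<exists>u B j. \<alpha> = Interc j (NT B) (Tup u) \<and> tup_len u \<le> 1) \<or>
     (\<exists>u. \<alpha> = Tup u \<and> tup_len u \<le> 1)"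

definition normal_form :: "('n, 't) dcfg \<Rightarrow> bool" where
  "normal_form G \<longleftrightarrow> (\<forall>(A, \<alpha>) \<in> Rules G. normal_rule \<alpha>)"

end

theory Submission
  imports Defs
begin


fun ev :: "('n, 't) tm \<Rightarrow> 't tuple \<Rightarrow> 't tuple" where
  "ev (Tup u) x = u"
| "ev (NT A) x = x"
| "ev (Conc a b) x = tconc (ev a x) (ev b x)"
| "ev (Interc j a b) x = tinterc j (ev a x) (ev b x)"

fun subst :: "('n, 't) tm \<Rightarrow> ('n, 't) tm \<Rightarrow> ('n, 't) tm" where
  "subst (Tup u) s = Tup u"
| "subst (NT A) s = s"
| "subst (Conc a b) s = Conc (subst a s) (subst b s)"
| "subst (Interc j a b) s = Interc j (subst a s) (subst b s)"

lemma ev_ground: "nts t = [] \<Longrightarrow> ev t x = val t"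
  by (induction t) auto

lemma ev_subst: "ev (subst t s) x = ev t (ev s x)"
  by (induction t) auto

lemma nts_subst: "nts (subst t s) = concat (replicate (length (nts t)) (nts s))"
  by (induction t) (auto simp: replicate_add)

lemma subst_ground: "nts t = [] \<Longrightarrow> subst t s = t"
  by (induction t) auto

lemma subst_NT_self: "nts t = [B] \<Longrightarrow> subst t (NT B) = t"
  by (induction t) (auto simp: append_eq_Cons_conv subst_ground)

inductive gen :: "('n, 't) dcfg \<Rightarrow> 'n \<Rightarrow> 't tuple \<Rightarrow> bool" for G where
  g0: "(A, \<beta>) \<in> Rules G \<Longrightarrow> nts \<beta> = [] \<Longrightarrow> gen G A (val \<beta>)"
| g1: "(A, \<beta>) \<in> Rules G \<Longrightarrow> nts \<beta> = [B] \<Longrightarrow> gen G B x \<Longrightarrow> gen G A (ev \<beta> x)"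

lemma dstep_nts: "dstep G t t' \<Longrightarrow> nts t \<noteq> []"
  by (induction rule: dstep.induct) auto

lemma dstep_lin: "dstep G t t' \<Longrightarrow> length (nts t) \<le> 1 \<Longrightarrow>
  \<exists>B \<beta>. nts t = [B] \<and> (B, \<beta>) \<in> Rules G \<and> t' = subst t \<beta>"
proof (induction rule: dstep.induct)
  case (rule B \<beta>) then show ?case by auto
next
  case (conc1 a a' b)
  then have "nts b = []" using dstep_nts[OF conc1(1)] by (cases "nts a"; cases "nts b") auto
  with conc1 show ?case by (auto simp: subst_ground)
next
  case (conc2 b b' a)
  then have "nts a = []" using dstep_nts[OF conc2(1)] by (cases "nts a"; cases "nts b") auto
  with conc2 show ?case by (auto simp: subst_ground)
next
  case (interc1 a a' j b)
  then have "nts b = []" using dstep_nts[OF interc1(1)] by (cases "nts a"; cases "nts b") auto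
  with interc1 show ?case by (auto simp: subst_ground)
next
  case (interc2 b b' j a)
  then have "nts a = []" using dstep_nts[OF interc2(1)] by (cases "nts a"; cases "nts b") auto
  with interc2 show ?case by (auto simp: subst_ground)
qed

lemma dstep_lift: "nts t = [B] \<Longrightarrow> dstep G a a' \<Longrightarrow> dstep G (subst t a) (subst t a')"
proof (induction t)
  case (Conc t1 t2)
  then show ?case
    by (cases "nts t1") (auto simp: subst_ground intro: dstep.intros)
next
  case (Interc j t1 t2)
  then show ?case
    by (cases "nts t1") (auto simp: subst_ground intro: dstep.intros)
qed auto

lemma dsteps_lift: "(dstep G)\<^sup>*\<^sup>* a a' \<Longrightarrow> nts t = [B] \<Longrightarrow> (dstep G)\<^sup>*\<^sup>* (subst t a) (subst t a')"
  by (induction rule: rtranclp_induct) (auto intro: rtranclp.rtrancl_into_rtrancl dstep_lift)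

lemma dsteps_gen:
  assumes "(dstep G)\<^sup>*\<^sup>* t s" "ground s" "length (nts t) \<le> 1" "linear_grammar G"
  shows "(nts t = [] \<longrightarrow> s = t) \<and> (\<forall>B. nts t = [B] \<longrightarrow> (\<exists>x. gen G B x \<and> val s = ev t x))"
  using assms
proof (induction rule: converse_rtranclp_induct)
  case base
  then show ?case by (auto simp: ground_def)
next
  case (step t t')
  from dstep_lin[OF step(1) step(5)] obtain B \<beta> where
    B: "nts t = [B]" "(B, \<beta>) \<in> Rules G" "t' = subst t \<beta>" by blast
  have lb: "length (nts \<beta>) \<le> 1" using B(2) step(6) by (auto simp: linear_grammar_def)
  have nt': "nts t' = nts \<beta>" using B by (simp add: nts_subst)
  have IH: "(nts \<beta> = [] \<longrightarrow> s = t') \<and> (\<forall>C. nts \<beta> = [C] \<longrightarrow> (\<exists>x. gen G C x \<and> val s = ev t' x))"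
    using step(3)[OF step(4)] lb nt' step(6) by simp
  show ?case
  proof (cases "nts \<beta>")
    case Nil
    then have "s = t'" using IH by simp
    then have "val s = ev t (val \<beta>)"
    proof -
      have "val s = ev (subst t \<beta>) []" using \<open>s = t'\<close> B(3) \<open>ground s\<close> ev_ground[of s "[]"]
        by (auto simp: ground_def)
      also have "\<dots> = ev t (val \<beta>)" by (simp add: ev_subst ev_ground[OF Nil])
      finally show ?thesis .
    qed
    moreover have "gen G B (val \<beta>)" using gen.g0[OF B(2) Nil] .
    ultimately show ?thesis using B by auto
  next
    case (Cons C l)
    with lb have "nts \<beta> = [C]" by simp
    with IH obtain x where "gen G C x" "val s = ev t' x" by blast
    then show ?thesis using B gen.g1[OF B(2) \<open>nts \<beta> = [C]\<close>] by (auto simp: ev_subst)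
  qed
qed

lemma gen_LG:
  assumes "linear_grammar G"
  shows "LG G A = {w. gen G A w}"
proof (intro set_eqI iffI)
  fix w assume "w \<in> LG G A"
  then obtain s where s: "derives G A s" "ground s" "w = val s" by (auto simp: LG_def)
  then show "w \<in> {w. gen G A w}"
    using dsteps_gen[of G "NT A" s] assms by (auto simp: derives_def)
next
  fix w assume "w \<in> {w. gen G A w}"
  then have "gen G A w" by simp
  then show "w \<in> LG G A"
  proof (induction rule: gen.induct)
    case (g0 A \<beta>)
    then show ?case unfolding LG_def derives_def ground_def
      by (auto intro!: exI[of _ \<beta>] dstep.rule)
  next
    case (g1 A \<beta> B x)
    then obtain s where s: "derives G B s" "ground s" "x = val s" by (auto simp: LG_def)
    have "(dstep G)\<^sup>*\<^sup>* (subst \<beta> (NT B)) (subst \<beta> s)"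
      using dsteps_lift s(1) g1(2) by (auto simp: derives_def)
    then have "(dstep G)\<^sup>*\<^sup>* \<beta> (subst \<beta> s)" using subst_NT_self[OF g1(2)] by simp
    then have "derives G A (subst \<beta> s)"
      using g1(1) unfolding derives_def by (auto intro: converse_rtranclp_into_rtranclp dstep.rule)
    moreover have "ground (subst \<beta> s)" using s(2) g1(2) by (auto simp: ground_def nts_subst)
    moreover have "val (subst \<beta> s) = ev \<beta> x"
      using ev_ground[of "subst \<beta> s" "[]"] ev_ground[of s] s \<open>ground (subst \<beta> s)\<close>
      by (auto simp: ground_def ev_subst)
    ultimately show ?case unfolding LG_def by force
  qed
qed



lemma length_tconc: "x \<noteq> [] \<Longrightarrow> y \<noteq> [] \<Longrightarrow> length (tconc x y) = length x + length y - 1"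
  by (cases y) (auto simp: tconc_def)

lemma tconc_ne: "tconc x y \<noteq> []"
  by (simp add: tconc_def)

lemma tconc_assoc: "a \<noteq> [] \<Longrightarrow> b \<noteq> [] \<Longrightarrow> c \<noteq> [] \<Longrightarrow> tconc (tconc a b) c = tconc a (tconc b c)"
  apply (cases c; cases b; cases a rule: rev_cases)
    apply (auto simp: tconc_def)
  apply (case_tac list rule: rev_cases)
   apply (auto simp: butlast_append)
  done

lemma tconc_eps_l: "x \<noteq> [] \<Longrightarrow> tconc [[]] x = x"
  by (cases x) (auto simp: tconc_def)

lemma tconc_eps_r: "x \<noteq> [] \<Longrightarrow> tconc x [[]] = x"
  by (auto simp: tconc_def)

lemma tconc_nil_cons: "a \<noteq> [] \<Longrightarrow> tconc a ([] # ys) = a @ ys"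
  by (auto simp: tconc_def)

lemma tconc_snoc_nil: "y \<noteq> [] \<Longrightarrow> tconc (a @ [[]]) y = a @ y"
  by (cases y) (auto simp: tconc_def)

lemma tconc_append: "b \<noteq> [] \<Longrightarrow> tconc (a @ b) z = a @ tconc b z"
  by (auto simp: tconc_def butlast_append)

lemma tconc_snoc: "b \<noteq> [] \<Longrightarrow> tconc (a @ b) [[]] = a @ b"
  by (auto simp: tconc_def butlast_append)

lemma length_tinterc: "1 \<le> j \<Longrightarrow> j < length x \<Longrightarrow> y \<noteq> [] \<Longrightarrow>
   length (tinterc j x y) = length x + length y - 2"
proof -
  assume a: "1 \<le> j" "j < length x" "y \<noteq> []"
  have "take j x \<noteq> []" "drop j x \<noteq> []" using a by auto
  then show ?thesis using a by (simp add: tinterc_def length_tconc tconc_ne)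
qed



lemma tinterc_F:
  assumes "1 \<le> j" "j < length x" "v \<noteq> []"
  shows "tinterc j (tinterc j x [[c],[]]) v = tinterc j x (tconc [[c]] v)"
proof -
  define P where "P = take j x"
  define Q where "Q = drop j x"
  have P: "P \<noteq> []" "length P = j" and Q: "Q \<noteq> []" using assms by (auto simp: P_def Q_def)
  have e1: "tconc P [[c],[]] = tconc P [[c]] @ [[]]" by (simp add: tconc_def)
  have l: "length (tconc P [[c]]) = j" using P by (simp add: length_tconc)
  have y: "tinterc j x [[c],[]] = tconc P [[c]] @ Q"
    unfolding tinterc_def P_def[symmetric] Q_def[symmetric] e1 using Q by (simp add: tconc_snoc_nil)
  show ?thesis unfolding y unfolding tinterc_def P_def[symmetric] Q_def[symmetric]
    using l P assms(3) by (simp add: tconc_assoc)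
qed

lemma tinterc_B:
  assumes "1 \<le> j" "j < length x" "v \<noteq> []"
  shows "tinterc j (tinterc j x [[],[c]]) v = tinterc j x (tconc v [[c]])"
proof -
  define P where "P = take j x"
  define Q where "Q = drop j x"
  have P: "P \<noteq> []" "length P = j" and Q: "Q \<noteq> []" using assms by (auto simp: P_def Q_def)
  have e1: "tconc P [[],[c]] = P @ [[c]]" using P tconc_nil_cons[of P "[[c]]"] by simp
  have y: "tinterc j x [[],[c]] = P @ tconc [[c]] Q"
    unfolding tinterc_def P_def[symmetric] Q_def[symmetric] e1 by (simp add: tconc_append)
  show ?thesis unfolding y unfolding tinterc_def P_def[symmetric] Q_def[symmetric]
    using P Q assms(3) by (simp add: tconc_assoc tconc_ne)
qed

lemma tinterc_C:
  assumes "1 \<le> j" "j < length x" "v \<noteq> []"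
  shows "tinterc (Suc j) (tinterc j x [[],[],[]]) v = tinterc j x ([] # v)"
proof -
  define P where "P = take j x"
  define Q where "Q = drop j x"
  have P: "P \<noteq> []" "length P = j" and Q: "Q \<noteq> []" using assms by (auto simp: P_def Q_def)
  have e1: "tconc P [[],[],[]] = (P @ [[]]) @ [[]]" using P tconc_nil_cons[of P "[[],[]]"] by simp
  have y: "tinterc j x [[],[],[]] = (P @ [[]]) @ Q"
    unfolding tinterc_def P_def[symmetric] Q_def[symmetric] e1 using tconc_snoc_nil[OF Q, of "P @ [[]]"] by simp
  show ?thesis unfolding y unfolding tinterc_def P_def[symmetric] Q_def[symmetric]
    using P Q assms(3) by (simp add: tconc_nil_cons tconc_snoc_nil)
qed

datatype 't bop = BL "'t tuple" | BR "'t tuple" | BI nat "'t tuple" | BC "'t tuple"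

fun app_op :: "'t bop \<Rightarrow> 't tuple \<Rightarrow> 't tuple" where
  "app_op (BL u) x = tconc u x"
| "app_op (BR u) x = tconc x u"
| "app_op (BI j u) x = tinterc j x u"
| "app_op (BC u) x = u"

fun rk_op :: "'t bop \<Rightarrow> nat \<Rightarrow> nat" where
  "rk_op (BL u) r = tup_rank u + r"
| "rk_op (BR u) r = tup_rank u + r"
| "rk_op (BI j u) r = r + tup_rank u - 1"
| "rk_op (BC u) r = tup_rank u"

fun ok_op :: "nat \<Rightarrow> 't bop \<Rightarrow> nat \<Rightarrow> bool" where
  "ok_op k (BL u) r = (u \<noteq> [] \<and> u \<noteq> [[]] \<and> tup_len u \<le> 1 \<and> tup_rank u + r \<le> k)"
| "ok_op k (BR u) r = (u \<noteq> [] \<and> u \<noteq> [[]] \<and> tup_len u \<le> 1 \<and> tup_rank u + r \<le> k)"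
| "ok_op k (BI j u) r = (u \<noteq> [] \<and> tup_len u \<le> 1 \<and> 1 \<le> j \<and> j \<le> r \<and> r \<le> k \<and> r + tup_rank u \<le> k + 1)"
| "ok_op k (BC u) r = (u \<noteq> [] \<and> tup_len u \<le> 1 \<and> tup_rank u \<le> k)"

abbreviation rks :: "'t bop list \<Rightarrow> nat \<Rightarrow> nat" where
  "rks os r \<equiv> foldr rk_op os r"

abbreviation apps :: "'t bop list \<Rightarrow> 't tuple \<Rightarrow> 't tuple" where
  "apps os x \<equiv> foldr app_op os x"

fun ok_ops :: "nat \<Rightarrow> 't bop list \<Rightarrow> nat \<Rightarrow> bool" where
  "ok_ops k [] r = True"
| "ok_ops k (p # os) r = (ok_op k p (rks os r) \<and> ok_ops k os r)"

fun isBC :: "'t bop \<Rightarrow> bool" where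
  "isBC (BC u) = True"
| "isBC _ = False"

definition noBC :: "'t bop list \<Rightarrow> bool" where
  "noBC os \<longleftrightarrow> (\<forall>p \<in> set os. \<not> isBC p)"

lemma ok_ops_append: "ok_ops k (a @ b) r = (ok_ops k a (rks b r) \<and> ok_ops k b r)"
  by (induction a) auto

lemma ok_ops_nth: "ok_ops k os r \<Longrightarrow> i < length os \<Longrightarrow> ok_op k (os ! i) (rks (drop (Suc i) os) r)"
  by (induction os arbitrary: i) (auto simp: nth_Cons split: nat.splits)

lemma rks_drop: "i < length os \<Longrightarrow> rk_op (os ! i) (rks (drop (Suc i) os) r) = rks (drop i os) r"
  by (induction os arbitrary: i) (auto simp: nth_Cons split: nat.splits)

lemma apps_drop: "i < length os \<Longrightarrow> app_op (os ! i) (apps (drop (Suc i) os) x) = apps (drop i os) x"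
  by (induction os arbitrary: i) (auto simp: nth_Cons split: nat.splits)

lemma tup_rank_ok: "u \<noteq> [] \<Longrightarrow> tup_rank u = length u - 1" by (simp add: tup_rank_def)

lemma bigL:
  "v \<noteq> [] \<Longrightarrow> tup_rank v + r \<le> k \<Longrightarrow> \<exists>os. (\<forall>x. x \<noteq> [] \<longrightarrow> apps os x = tconc v x) \<and>
     rks os r = tup_rank v + r \<and> ok_ops k os r \<and> noBC os"
proof (induction "length v + tup_len v" arbitrary: v rule: less_induct)
  case less
  obtain w vs where v: "v = w # vs" using less(2) by (cases v) auto
  show ?case
  proof (cases w)
    case (Cons c w')
    define v' where "v' = w' # vs"
    have vv: "v = tconc [[c]] v'" by (simp add: v Cons v'_def tconc_def)
    have m: "length v' + tup_len v' < length v + tup_len v" by (simp add: v Cons v'_def tup_len_def)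
    have rv: "tup_rank v' = tup_rank v" by (simp add: v v'_def tup_rank_def)
    obtain os where os: "\<forall>x. x \<noteq> [] \<longrightarrow> apps os x = tconc v' x" "rks os r = tup_rank v' + r"
      "ok_ops k os r" "noBC os"
      using less(1)[OF m] less(3) rv by (auto simp: v'_def)
    show ?thesis
      apply (rule exI[of _ "BL [[c]] # os"])
      using os rv less(3) by (auto simp: vv tconc_assoc v'_def noBC_def tup_len_def tup_rank_def)
  next
    case Nil
    show ?thesis
    proof (cases vs)
      case Nil2: Nil
      show ?thesis
        by (rule exI[of _ "[]"]) (auto simp: v Nil Nil2 tconc_eps_l noBC_def tup_rank_def)
    next
      case (Cons v1 vs')
      have vv: "v = tconc [[],[]] vs" by (simp add: v Nil Cons tconc_def)
      have m: "length vs + tup_len vs < length v + tup_len v" by (simp add: v Nil tup_len_def)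
      have rv: "tup_rank vs + 1 = tup_rank v" by (simp add: v Cons tup_rank_def)
      obtain os where os: "\<forall>x. x \<noteq> [] \<longrightarrow> apps os x = tconc vs x" "rks os r = tup_rank vs + r"
        "ok_ops k os r" "noBC os"
        using less(1)[OF m] less(3) rv Cons by auto
      show ?thesis
        apply (rule exI[of _ "BL [[],[]] # os"])
        using os rv less(3) Cons by (auto simp: vv tconc_assoc noBC_def tup_len_def tup_rank_def)
    qed
  qed
qed

lemma bigR:
  "v \<noteq> [] \<Longrightarrow> tup_rank v + r \<le> k \<Longrightarrow> \<exists>os. (\<forall>x. x \<noteq> [] \<longrightarrow> apps os x = tconc x v) \<and>
     rks os r = tup_rank v + r \<and> ok_ops k os r \<and> noBC os"
proof (induction "length v + tup_len v" arbitrary: v rule: less_induct)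
  case less
  obtain w vs where v: "v = vs @ [w]" using less(2) by (cases v rule: rev_cases) auto
  show ?case
  proof (cases w rule: rev_cases)
    case (snoc w' c)
    define v' where "v' = vs @ [w']"
    have vv: "v = tconc v' [[c]]" by (simp add: v snoc v'_def tconc_def)
    have m: "length v' + tup_len v' < length v + tup_len v" by (simp add: v snoc v'_def tup_len_def)
    have rv: "tup_rank v' = tup_rank v" by (simp add: v v'_def tup_rank_def)
    obtain os where os: "\<forall>x. x \<noteq> [] \<longrightarrow> apps os x = tconc x v'" "rks os r = tup_rank v' + r"
      "ok_ops k os r" "noBC os"
      using less(1)[OF m] less(3) rv by (auto simp: v'_def)
    show ?thesis
      apply (rule exI[of _ "BR [[c]] # os"])
      using os rv less(3) by (auto simp: vv tconc_assoc v'_def noBC_def tup_len_def tup_rank_def)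
  next
    case Nil
    show ?thesis
    proof (cases vs rule: rev_cases)
      case Nil2: Nil
      show ?thesis
        by (rule exI[of _ "[]"]) (auto simp: v Nil Nil2 tconc_eps_r noBC_def tup_rank_def)
    next
      case (snoc vs' v1)
      have vv: "v = tconc vs [[],[]]" by (simp add: v Nil snoc tconc_def)
      have m: "length vs + tup_len vs < length v + tup_len v" by (simp add: v Nil tup_len_def)
      have rv: "tup_rank vs + 1 = tup_rank v" by (simp add: v snoc tup_rank_def)
      obtain os where os: "\<forall>x. x \<noteq> [] \<longrightarrow> apps os x = tconc x vs" "rks os r = tup_rank vs + r"
        "ok_ops k os r" "noBC os"
        using less(1)[OF m] less(3) rv snoc by auto
      show ?thesis
        apply (rule exI[of _ "BR [[],[]] # os"])
        using os rv less(3) snoc by (auto simp: vv tconc_assoc noBC_def tup_len_def tup_rank_def)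
    qed
  qed
qed



lemma bigI:
  "1 \<le> j \<Longrightarrow> j \<le> r \<Longrightarrow> r \<le> k \<Longrightarrow> r + tup_rank v \<le> k + 1 \<Longrightarrow> v \<noteq> [] \<Longrightarrow>
   \<exists>os. (\<forall>x. length x = r + 1 \<longrightarrow> apps os x = tinterc j x v) \<and>
     rks os r = r + tup_rank v - 1 \<and> ok_ops k os r \<and> noBC os"
proof (induction "length v + tup_len v" arbitrary: v j r rule: less_induct)
  case less
  show ?case
  proof (cases "tup_len v \<le> 1")
    case True
    show ?thesis
      by (rule exI[of _ "[BI j v]"]) (use less True in \<open>auto simp: noBC_def\<close>)
  next
    case False
    obtain w vs where v: "v = w # vs" using less(6) by (cases v) auto
    show ?thesis
    proof (cases w)
      case (Cons c w')
      define v' where "v' = w' # vs"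
      have vv: "v = tconc [[c]] v'" by (simp add: v Cons v'_def tconc_def)
      have m: "length v' + tup_len v' < length v + tup_len v" by (simp add: v Cons v'_def tup_len_def)
      have rv: "tup_rank v' = tup_rank v" by (simp add: v v'_def tup_rank_def)
      obtain os where os: "\<forall>x. length x = r + 1 \<longrightarrow> apps os x = tinterc j x v'"
        "rks os r = r + tup_rank v' - 1" "ok_ops k os r" "noBC os"
        using less(1)[OF m less(2,3,4)] less(5) rv by (auto simp: v'_def)
      show ?thesis
      proof (rule exI[of _ "os @ [BI j [[c],[]]]"], intro conjI allI impI)
        fix x :: "'a tuple" assume x: "length x = r + 1"
        have l: "length (tinterc j x [[c],[]]) = r + 1" using x less by (simp add: length_tinterc)
        show "apps (os @ [BI j [[c], []]]) x = tinterc j x v"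
          using os(1) l x less tinterc_F[of j x v' c] by (simp add: vv v'_def)
      qed (use os less rv in \<open>auto simp: ok_ops_append noBC_def tup_len_def tup_rank_def\<close>)
    next
      case Nil
      obtain vs0 wl where v2: "v = vs0 @ [wl]" using less(6) by (cases v rule: rev_cases) auto
      show ?thesis
      proof (cases wl rule: rev_cases)
        case (snoc w'' c)
        define v' where "v' = vs0 @ [w'']"
        have vv: "v = tconc v' [[c]]" by (simp add: v2 snoc v'_def tconc_def)
        have m: "length v' + tup_len v' < length v + tup_len v" by (simp add: v2 snoc v'_def tup_len_def)
        have rv: "tup_rank v' = tup_rank v" by (simp add: v2 v'_def tup_rank_def)
        obtain os where os: "\<forall>x. length x = r + 1 \<longrightarrow> apps os x = tinterc j x v'"
          "rks os r = r + tup_rank v' - 1" "ok_ops k os r" "noBC os"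
          using less(1)[OF m less(2,3,4)] less(5) rv by (auto simp: v'_def)
        show ?thesis
        proof (rule exI[of _ "os @ [BI j [[],[c]]]"], intro conjI allI impI)
          fix x :: "'a tuple" assume x: "length x = r + 1"
          have l: "length (tinterc j x [[],[c]]) = r + 1" using x less by (simp add: length_tinterc)
          show "apps (os @ [BI j [[],[c]]]) x = tinterc j x v"
            using os(1) l x less tinterc_B[of j x v' c] by (simp add: vv v'_def)
        qed (use os less rv in \<open>auto simp: ok_ops_append noBC_def tup_len_def tup_rank_def\<close>)
      next
        case Nil2: Nil
        have vs: "vs \<noteq> []" using v v2 Nil Nil2 False by (cases vs) (auto simp: tup_len_def)
        obtain vs1 where vs1: "vs = vs1 @ [[]]" using v v2 Nil2 vs by (cases vs rule: rev_cases) auto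
        have vs1n: "vs1 \<noteq> []" using False v vs1 Nil by (auto simp: tup_len_def)
        have m: "length vs + tup_len vs < length v + tup_len v" by (simp add: v Nil tup_len_def)
        have rv: "tup_rank v = tup_rank vs + 1" "tup_rank vs \<ge> 1" using v vs1 vs1n by (auto simp: tup_rank_def Suc_le_eq)
        obtain os where os: "\<forall>x. length x = Suc r + 1 \<longrightarrow> apps os x = tinterc (Suc j) x vs"
          "rks os (Suc r) = Suc r + tup_rank vs - 1" "ok_ops k os (Suc r)" "noBC os"
          using less(1)[OF m, of "Suc j" "Suc r"] less(2-5) rv vs by auto
        show ?thesis
        proof (rule exI[of _ "os @ [BI j [[],[],[]]]"], intro conjI allI impI)
          fix x :: "'a tuple" assume x: "length x = r + 1"
          have l: "length (tinterc j x [[],[],[]]) = Suc r + 1" using x less by (simp add: length_tinterc)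
          show "apps (os @ [BI j [[],[],[]]]) x = tinterc j x v"
            using os(1) l x less tinterc_C[of j x vs] vs by (simp add: v Nil)
        qed (use os less rv in \<open>auto simp: ok_ops_append noBC_def tup_len_def tup_rank_def\<close>)
      qed
    qed
  qed
qed



lemma kc_rank: "kcorrect k rh t \<Longrightarrow> trank rh t \<le> k"
  by (induction t) (auto simp: tup_rank_def)

lemma ev_len: "kcorrect k rh t \<Longrightarrow> (\<forall>B \<in> set (nts t). length x = rh B + 1) \<Longrightarrow>
   length (ev t x) = trank rh t + 1"
proof (induction t)
  case (Tup u) then show ?case by (auto simp: tup_rank_def)
next
  case (Conc a b)
  then have "length (ev a x) = trank rh a + 1" "length (ev b x) = trank rh b + 1" by auto
  then have "ev a x \<noteq> []" "ev b x \<noteq> []" by auto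
  with \<open>length (ev a x) = trank rh a + 1\<close> \<open>length (ev b x) = trank rh b + 1\<close>
  show ?case by (simp add: length_tconc)
next
  case (Interc j a b)
  then have "length (ev a x) = trank rh a + 1" "length (ev b x) = trank rh b + 1"
    "1 \<le> j" "j \<le> trank rh a" by auto
  moreover have "ev b x \<noteq> []" using calculation by auto
  ultimately show ?case by (simp add: length_tinterc)
qed auto

lemma val_len: "kcorrect k rh t \<Longrightarrow> nts t = [] \<Longrightarrow> length (val t) = trank rh t + 1"
  using ev_len[of k rh t] ev_ground[of t] by fastforce

lemma noBC_append: "noBC (a @ b) = (noBC a \<and> noBC b)"
  by (auto simp: noBC_def)

lemma ctx_ops: "kcorrect k rh \<beta> \<Longrightarrow> nts \<beta> = [B] \<Longrightarrow>
  \<exists>os. (\<forall>x. length x = rh B + 1 \<longrightarrow> apps os x = ev \<beta> x) \<and> rks os (rh B) = trank rh \<beta> \<and>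
       ok_ops k os (rh B) \<and> noBC os"
proof (induction \<beta>)
  case (NT A)
  then show ?case by (intro exI[of _ "[]"]) (auto simp: noBC_def)
next
  case (Conc a b)
  show ?case
  proof (cases "nts a")
    case (Cons A l)
    then have na: "nts a = [B]" and nb: "nts b = []" using Conc(4) by auto
    obtain osa where osa: "\<forall>x. length x = rh B + 1 \<longrightarrow> apps osa x = ev a x" "rks osa (rh B) = trank rh a"
      "ok_ops k osa (rh B)" "noBC osa" using Conc na by auto
    have lv: "length (val b) = trank rh b + 1" using val_len Conc(3) nb by auto
    have p: "val b \<noteq> []" "tup_rank (val b) + trank rh a \<le> k" using lv Conc(3) by (auto simp: tup_rank_def)
    obtain osR where osR: "\<forall>x. x \<noteq> [] \<longrightarrow> apps osR x = tconc x (val b)"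
      "rks osR (trank rh a) = tup_rank (val b) + trank rh a" "ok_ops k osR (trank rh a)" "noBC osR"
      using bigR[OF p] by blast
    show ?thesis
    proof (rule exI[of _ "osR @ osa"], intro conjI allI impI)
      fix x :: "'b tuple" assume x: "length x = rh B + 1"
      have "length (ev a x) = trank rh a + 1" using ev_len[of k rh a x] Conc(3) na x by auto
      then have "ev a x \<noteq> []" by auto
      then show "apps (osR @ osa) x = ev (Conc a b) x"
        using osR(1) osa(1) x ev_ground[OF nb] by auto
    qed (use osR osa lv in \<open>auto simp: ok_ops_append noBC_append tup_rank_def\<close>)
  next
    case Nil
    then have na: "nts a = []" and nb: "nts b = [B]" using Conc(4) by auto
    obtain osb where osb: "\<forall>x. length x = rh B + 1 \<longrightarrow> apps osb x = ev b x" "rks osb (rh B) = trank rh b"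
      "ok_ops k osb (rh B)" "noBC osb" using Conc nb by auto
    have lv: "length (val a) = trank rh a + 1" using val_len Conc(3) na by auto
    have p: "val a \<noteq> []" "tup_rank (val a) + trank rh b \<le> k" using lv Conc(3) by (auto simp: tup_rank_def)
    obtain osL where osL: "\<forall>x. x \<noteq> [] \<longrightarrow> apps osL x = tconc (val a) x"
      "rks osL (trank rh b) = tup_rank (val a) + trank rh b" "ok_ops k osL (trank rh b)" "noBC osL"
      using bigL[OF p] by blast
    show ?thesis
    proof (rule exI[of _ "osL @ osb"], intro conjI allI impI)
      fix x :: "'b tuple" assume x: "length x = rh B + 1"
      have "length (ev b x) = trank rh b + 1" using ev_len[of k rh b x] Conc(3) nb x by auto
      then have "ev b x \<noteq> []" by auto
      then show "apps (osL @ osb) x = ev (Conc a b) x"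
        using osL(1) osb(1) x ev_ground[OF na] by auto
    qed (use osL osb lv in \<open>auto simp: ok_ops_append noBC_append tup_rank_def\<close>)
  qed
next
  case (Interc j a b)
  show ?case
  proof (cases "nts a")
    case (Cons A l)
    then have na: "nts a = [B]" and nb: "nts b = []" using Interc(4) by auto
    obtain osa where osa: "\<forall>x. length x = rh B + 1 \<longrightarrow> apps osa x = ev a x" "rks osa (rh B) = trank rh a"
      "ok_ops k osa (rh B)" "noBC osa" using Interc na by auto
    have lv: "length (val b) = trank rh b + 1" using val_len Interc(3) nb by auto
    have ka: "trank rh a \<le> k" using kc_rank Interc(3) by auto
    have p: "1 \<le> j" "j \<le> trank rh a" "trank rh a + tup_rank (val b) \<le> k + 1" "val b \<noteq> []"
      using Interc(3) lv by (auto simp: tup_rank_def)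
    obtain osI where osI: "\<forall>x. length x = trank rh a + 1 \<longrightarrow> apps osI x = tinterc j x (val b)"
      "rks osI (trank rh a) = trank rh a + tup_rank (val b) - 1" "ok_ops k osI (trank rh a)" "noBC osI"
      using bigI[OF p(1,2) ka p(3,4)] by blast
    show ?thesis
    proof (rule exI[of _ "osI @ osa"], intro conjI allI impI)
      fix x :: "'b tuple" assume x: "length x = rh B + 1"
      have "length (ev a x) = trank rh a + 1" using ev_len[of k rh a x] Interc(3) na x by auto
      then have "ev a x \<noteq> []" "length (ev a x) = trank rh a + 1" by auto
      then show "apps (osI @ osa) x = ev (Interc j a b) x"
        using osI(1) osa(1) x ev_ground[OF nb] by auto
    qed (use osI osa lv in \<open>auto simp: ok_ops_append noBC_append tup_rank_def\<close>)
  next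
    case Nil
    then have na: "nts a = []" and nb: "nts b = [B]" using Interc(4) by auto
    obtain osb where osb: "\<forall>x. length x = rh B + 1 \<longrightarrow> apps osb x = ev b x" "rks osb (rh B) = trank rh b"
      "ok_ops k osb (rh B)" "noBC osb" using Interc nb by auto
    define g where "g = val a"
    have lv: "length g = trank rh a + 1" using val_len Interc(3) na by (auto simp: g_def)
    have j: "1 \<le> j" "j \<le> trank rh a" "trank rh a + trank rh b \<le> k + 1" using Interc(3) by auto
    have rL: "tup_rank (take j g) = j - 1" using lv j by (simp add: tup_rank_def)
    have rR: "tup_rank (drop j g) = trank rh a - j" using lv j by (simp add: tup_rank_def)
    have pL: "take j g \<noteq> []" "tup_rank (take j g) + trank rh b \<le> k" using j lv rL by auto
    have pR: "drop j g \<noteq> []" "tup_rank (drop j g) + (j - 1 + trank rh b) \<le> k" using j lv rR by auto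
    obtain osL where osL: "\<forall>x. x \<noteq> [] \<longrightarrow> apps osL x = tconc (take j g) x"
      "rks osL (trank rh b) = tup_rank (take j g) + trank rh b" "ok_ops k osL (trank rh b)" "noBC osL"
      using bigL[OF pL] by blast
    obtain osR where osR: "\<forall>x. x \<noteq> [] \<longrightarrow> apps osR x = tconc x (drop j g)"
      "rks osR (j - 1 + trank rh b) = tup_rank (drop j g) + (j - 1 + trank rh b)"
      "ok_ops k osR (j - 1 + trank rh b)" "noBC osR"
      using bigR[OF pR] by blast
    show ?thesis
    proof (rule exI[of _ "osR @ osL @ osb"], intro conjI allI impI)
      fix x :: "'b tuple" assume x: "length x = rh B + 1"
      have "length (ev b x) = trank rh b + 1" using ev_len[of k rh b x] Interc(3) nb x by auto
      then have "ev b x \<noteq> []" by auto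
      then show "apps (osR @ osL @ osb) x = ev (Interc j a b) x"
        using osR(1) osL(1) osb(1) x ev_ground[OF na] by (auto simp: tinterc_def g_def tconc_ne)
    qed (use osR osL osb j rL rR in \<open>auto simp: ok_ops_append noBC_append\<close>)
  qed
qed auto

lemma ground_ops: "kcorrect k rh g \<Longrightarrow> nts g = [] \<Longrightarrow>
  \<exists>os. os \<noteq> [] \<and> (\<forall>x. apps os x = val g) \<and> (\<forall>r. rks os r = trank rh g \<and> ok_ops k os r) \<and>
       noBC (butlast os) \<and> isBC (last os)"
proof -
  assume a: "kcorrect k rh g" "nts g = []"
  have lv: "length (val g) = trank rh g + 1" using val_len a by auto
  have p: "val g \<noteq> []" "tup_rank (val g) + 0 \<le> k" using lv kc_rank[OF a(1)] by (auto simp: tup_rank_def)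
  obtain osL where osL: "\<forall>x. x \<noteq> [] \<longrightarrow> apps osL x = tconc (val g) x"
      "rks osL 0 = tup_rank (val g) + 0" "ok_ops k osL 0" "noBC osL"
    using bigL[OF p] by blast
  show ?thesis
    apply (rule exI[of _ "osL @ [BC [[]]]"])
    using osL lv p by (auto simp: ok_ops_append tconc_eps_r tup_rank_def tup_len_def)
qed



datatype ('n, 't) nt2 = Orig 'n | Chain "'n \<times> ('n, 't) tm" nat

definition tg :: "'n \<times> ('n, 't) tm \<Rightarrow> 'n" where
  "tg r = (if nts (snd r) = [] then fst r else hd (nts (snd r)))"

definition good_ops :: "nat \<Rightarrow> ('n, 't) dcfg \<Rightarrow> 'n \<times> ('n, 't) tm \<Rightarrow> 't bop list \<Rightarrow> bool" where
  "good_ops k G r os \<longleftrightarrow> (if nts (snd r) = [] then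
      os \<noteq> [] \<and> (\<forall>x. apps os x = val (snd r)) \<and> (\<forall>\<rho>. rks os \<rho> = trank (rk G) (snd r) \<and> ok_ops k os \<rho>)
      \<and> noBC (butlast os) \<and> isBC (last os)
    else (\<forall>x. length x = rk G (tg r) + 1 \<longrightarrow> apps os x = ev (snd r) x) \<and>
      rks os (rk G (tg r)) = trank (rk G) (snd r) \<and> ok_ops k os (rk G (tg r)) \<and> noBC os)"

definition osf :: "nat \<Rightarrow> ('n, 't) dcfg \<Rightarrow> 'n \<times> ('n, 't) tm \<Rightarrow> 't bop list" where
  "osf k G r = (SOME os. good_ops k G r os)"

lemma good_osf:
  assumes "is_kDCFG k G" "linear_grammar G" "r \<in> Rules G"
  shows "good_ops k G r (osf k G r)"
proof -
  obtain A \<beta> where r: "r = (A, \<beta>)" by (cases r)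
  have kc: "kcorrect k (rk G) \<beta>" and ln: "length (nts \<beta>) \<le> 1"
    using assms r by (auto simp: is_kDCFG_def linear_grammar_def)
  have "\<exists>os. good_ops k G r os"
  proof (cases "nts \<beta>")
    case Nil
    then show ?thesis using ground_ops[OF kc Nil] by (auto simp: good_ops_def r)
  next
    case (Cons B l)
    then have nb: "nts \<beta> = [B]" using ln by auto
    then show ?thesis using ctx_ops[OF kc nb] by (auto simp: good_ops_def r tg_def)
  qed
  then show ?thesis unfolding osf_def by (rule someI_ex)
qed

definition U :: "nat \<Rightarrow> ('n, 't) dcfg \<Rightarrow> ('n \<times> 'n) set" where
  "U k G = {(A, B). \<exists>\<beta>. (A, \<beta>) \<in> Rules G \<and> nts \<beta> = [B] \<and> osf k G (A, \<beta>) = []}"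

fun opt :: "'t bop \<Rightarrow> 'm \<Rightarrow> ('m, 't) tm" where
  "opt (BL u) N = Conc (Tup u) (NT N)"
| "opt (BR u) N = Conc (NT N) (Tup u)"
| "opt (BI j u) N = Interc j (NT N) (Tup u)"
| "opt (BC u) N = Tup u"

definition dst :: "nat \<Rightarrow> ('n, 't) dcfg \<Rightarrow> 'n \<times> ('n, 't) tm \<Rightarrow> nat \<Rightarrow> ('n, 't) nt2" where
  "dst k G r i = (if Suc i = length (osf k G r) then Orig (tg r) else Chain r (Suc i))"

fun rk2 :: "nat \<Rightarrow> ('n, 't) dcfg \<Rightarrow> ('n, 't) nt2 \<Rightarrow> nat" where
  "rk2 k G (Orig A) = rk G A"
| "rk2 k G (Chain r i) = rks (drop i (osf k G r)) (rk G (tg r))"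

definition G2 :: "nat \<Rightarrow> ('n, 't) dcfg \<Rightarrow> (('n, 't) nt2, 't) dcfg" where
  "G2 k G = \<lparr> Nts = Orig ` Nts G \<union> {Chain r i | r i. r \<in> Rules G \<and> 0 < i \<and> i < length (osf k G r)},
     rk = rk2 k G,
     Rules = {(Orig A, opt (osf k G r ! 0) (dst k G r 0)) | A r.
                A \<in> Nts G \<and> (A, fst r) \<in> (U k G)\<^sup>* \<and> r \<in> Rules G \<and> osf k G r \<noteq> []} \<union>
             {(Chain r i, opt (osf k G r ! i) (dst k G r i)) | r i.
                r \<in> Rules G \<and> 0 < i \<and> i < length (osf k G r)},
     Start = Orig (Start G) \<rparr>"

lemma opt_props:
  assumes "ok_op k p (rh N)"
  shows "kcorrect k rh (opt p N) \<and> trank rh (opt p N) = rk_op p (rh N) \<and>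
    (\<forall>u\<in>set (leaf_tuples (opt p N)). tup_len u \<le> 1) \<and> normal_rule (opt p N) \<and>
    set (nts (opt p N)) \<subseteq> {N} \<and> length (nts (opt p N)) \<le> 1"
  using assms by (cases p) (auto simp: normal_rule_def tup_rank_def)

lemma opt_nonBC: "\<not> isBC p \<Longrightarrow> nts (opt p N) = [N] \<and> ev (opt p N) y = app_op p y"
  by (cases p) auto

lemma opt_BC: "isBC p \<Longrightarrow> nts (opt p N) = [] \<and> val (opt p N) = app_op p y"
  by (cases p) auto



context
  fixes k :: nat and G :: "('n, 't) dcfg"
  assumes kd: "is_kDCFG k G" and lin: "linear_grammar G"
begin

lemma rule_props: "(A, \<beta>) \<in> Rules G \<Longrightarrow> A \<in> Nts G \<and> set (nts \<beta>) \<subseteq> Nts G \<and> kcorrect k (rk G) \<beta> \<and>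
   rk G A = trank (rk G) \<beta> \<and> length (nts \<beta>) \<le> 1"
  using kd lin by (auto simp: is_kDCFG_def linear_grammar_def)

lemma gen_len: "gen G A w \<Longrightarrow> length w = rk G A + 1"
proof (induction rule: gen.induct)
  case (g0 A \<beta>)
  then show ?case using rule_props[OF g0(1)] val_len by metis
next
  case (g1 A \<beta> B x)
  then show ?case using rule_props[OF g1(1)] ev_len[of k "rk G" \<beta> x] by auto
qed

lemma tg_Nts: "r \<in> Rules G \<Longrightarrow> tg r \<in> Nts G"
  using rule_props[of "fst r" "snd r"] by (cases "nts (snd r)") (auto simp: tg_def)

lemma good: "r \<in> Rules G \<Longrightarrow> good_ops k G r (osf k G r)"
  using good_osf[OF kd lin] by blast

lemma U_rank: "(A, B) \<in> (U k G)\<^sup>* \<Longrightarrow> rk G A = rk G B"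
proof (induction rule: rtrancl_induct)
  case (step y z)
  then obtain \<beta> where b: "(y, \<beta>) \<in> Rules G" "nts \<beta> = [z]" "osf k G (y, \<beta>) = []"
    by (auto simp: U_def)
  have "rks [] (rk G z) = trank (rk G) \<beta>" using good[OF b(1)] b by (auto simp: good_ops_def tg_def)
  then show ?case using step rule_props[OF b(1)] by simp
qed simp

lemma U_gen: "(A, B) \<in> (U k G)\<^sup>* \<Longrightarrow> gen G B w \<Longrightarrow> gen G A w"
proof (induction rule: converse_rtrancl_induct)
  case (step y z)
  then obtain \<beta> where b: "(y, \<beta>) \<in> Rules G" "nts \<beta> = [z]" "osf k G (y, \<beta>) = []"
    by (auto simp: U_def)
  have g: "gen G z w" using step by simp
  have "ev \<beta> w = w" using good[OF b(1)] b gen_len[OF g] by (auto simp: good_ops_def tg_def)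
  then show ?case using gen.g1[OF b(1,2) g] by simp
qed simp

lemma U_Nts: "(A, B) \<in> (U k G)\<^sup>* \<Longrightarrow> A \<in> Nts G \<Longrightarrow> B \<in> Nts G"
proof (induction rule: rtrancl_induct)
  case (step y z)
  then obtain \<beta> where b: "(y, \<beta>) \<in> Rules G" "nts \<beta> = [z]" by (auto simp: U_def)
  then show ?case using rule_props[OF b(1)] by auto
qed simp

lemma ok_at: "r \<in> Rules G \<Longrightarrow> i < length (osf k G r) \<Longrightarrow>
   ok_op k (osf k G r ! i) (rks (drop (Suc i) (osf k G r)) (rk G (tg r)))"
  using good[of r] ok_ops_nth by (auto simp: good_ops_def split: if_splits)

lemma rks_full: "r \<in> Rules G \<Longrightarrow> rks (osf k G r) (rk G (tg r)) = rk G (fst r)"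
  using good[of r] rule_props[of "fst r" "snd r"] by (auto simp: good_ops_def split: if_splits)

lemma rk2_dst: "r \<in> Rules G \<Longrightarrow> i < length (osf k G r) \<Longrightarrow>
   rk2 k G (dst k G r i) = rks (drop (Suc i) (osf k G r)) (rk G (tg r))"
  by (auto simp: dst_def)

lemma nonground_noBC: "r \<in> Rules G \<Longrightarrow> nts (snd r) \<noteq> [] \<Longrightarrow> i < length (osf k G r) \<Longrightarrow>
   \<not> isBC (osf k G r ! i)"
  using good[of r] by (auto simp: good_ops_def noBC_def)

lemma ground_BC: "r \<in> Rules G \<Longrightarrow> nts (snd r) = [] \<Longrightarrow> i < length (osf k G r) \<Longrightarrow>
   isBC (osf k G r ! i) \<longleftrightarrow> Suc i = length (osf k G r)"
proof -
  assume a: "r \<in> Rules G" "nts (snd r) = []" "i < length (osf k G r)"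
  define os where "os = osf k G r"
  have g: "os \<noteq> []" "noBC (butlast os)" "isBC (last os)" using good[OF a(1)] a(2)
    by (auto simp: good_ops_def os_def)
  show ?thesis
  proof (cases "Suc i = length os")
    case True
    then have "i = length os - 1" by (simp add: os_def)
    then show ?thesis using g True by (simp add: last_conv_nth os_def)
  next
    case False
    then have "os ! i \<in> set (butlast os)" using a(3)
      by (simp add: os_def nth_butlast[symmetric] length_butlast)
    then show ?thesis using g False by (auto simp: noBC_def os_def)
  qed
qed

lemma G2_kDCFG: "is_kDCFG k (G2 k G)"
  unfolding is_kDCFG_def
proof (intro conjI)
  let ?C = "{Chain r i | r i. r \<in> Rules G \<and> 0 < i \<and> i < length (osf k G r)}"
  have fR: "finite (Rules G)" and fN: "finite (Nts G)" using kd by (auto simp: is_kDCFG_def)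
  have C: "?C = (\<lambda>(r, i). Chain r i) ` (SIGMA r:Rules G. {0<..<length (osf k G r)})" by auto
  have fC: "finite ?C" unfolding C using fR by auto
  show "finite (Nts (G2 k G))" using fN fC by (simp add: G2_def)
  show "Start (G2 k G) \<in> Nts (G2 k G)" "rk (G2 k G) (Start (G2 k G)) = 0"
    using kd by (auto simp: G2_def is_kDCFG_def)
  have s1: "{(Orig A, opt (osf k G r ! 0) (dst k G r 0)) | A r.
                A \<in> Nts G \<and> (A, fst r) \<in> (U k G)\<^sup>* \<and> r \<in> Rules G \<and> osf k G r \<noteq> []}
     \<subseteq> (\<lambda>(A, r). (Orig A, opt (osf k G r ! 0) (dst k G r 0))) ` (Nts G \<times> Rules G)" by auto
  have s2: "{(Chain r i, opt (osf k G r ! i) (dst k G r i)) | r i.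
                r \<in> Rules G \<and> 0 < i \<and> i < length (osf k G r)} =
     (\<lambda>(r, i). (Chain r i, opt (osf k G r ! i) (dst k G r i))) ` (SIGMA r:Rules G. {0<..<length (osf k G r)})"
    by auto
  define S1 where "S1 = {(Orig A :: ('n,'t) nt2, opt (osf k G r ! 0) (dst k G r 0)) | A r.
                A \<in> Nts G \<and> (A, fst r) \<in> (U k G)\<^sup>* \<and> r \<in> Rules G \<and> osf k G r \<noteq> []}"
  define S2 where "S2 = {(Chain r i, opt (osf k G r ! i) (dst k G r i)) | r i.
                r \<in> Rules G \<and> 0 < i \<and> i < length (osf k G r)}"
  have f1: "finite S1" unfolding S1_def by (rule finite_subset[OF s1]) (use fR fN in auto)
  have f2: "finite S2" unfolding S2_def s2 using fR by auto
  have "Rules (G2 k G) = S1 \<union> S2" unfolding S1_def S2_def G2_def by simp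
  then show "finite (Rules (G2 k G))" using f1 f2 by simp
  show "\<forall>(A, \<alpha>)\<in>Rules (G2 k G). A \<in> Nts (G2 k G) \<and> set (nts \<alpha>) \<subseteq> Nts (G2 k G) \<and>
        kcorrect k (rk (G2 k G)) \<alpha> \<and> rk (G2 k G) A = trank (rk (G2 k G)) \<alpha> \<and>
        (\<forall>u\<in>set (leaf_tuples \<alpha>). tup_len u \<le> 1)"
  proof (clarify)
    fix N \<alpha> assume "(N, \<alpha>) \<in> Rules (G2 k G)"
    then obtain r i where ri: "r \<in> Rules G" "i < length (osf k G r)" "\<alpha> = opt (osf k G r ! i) (dst k G r i)"
      and cases: "(i = 0 \<and> (\<exists>A. N = Orig A \<and> A \<in> Nts G \<and> (A, fst r) \<in> (U k G)\<^sup>*)) \<or> (0 < i \<and> N = Chain r i)"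
      unfolding G2_def by auto
    have ok: "ok_op k (osf k G r ! i) (rk2 k G (dst k G r i))" using ok_at[OF ri(1,2)] rk2_dst[OF ri(1,2)] by simp
    note P = opt_props[of k "osf k G r ! i" "rk2 k G" "dst k G r i", OF ok]
    have dN: "dst k G r i \<in> Nts (G2 k G)"
    proof (cases "Suc i = length (osf k G r)")
      case True then show ?thesis using tg_Nts[OF ri(1)] by (simp add: dst_def G2_def)
    next
      case False then have "Suc i < length (osf k G r)" using ri(2) by simp
      then have "Chain r (Suc i) \<in> {Chain r i | r i. r \<in> Rules G \<and> 0 < i \<and> i < length (osf k G r)}"
        using ri(1) by blast
      then show ?thesis using False unfolding dst_def G2_def by simp
    qed
    have rkN: "rk2 k G N = trank (rk2 k G) \<alpha>"
    proof -
      have "trank (rk2 k G) \<alpha> = rks (drop i (osf k G r)) (rk G (tg r))"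
        using P ri rk2_dst[OF ri(1,2)] rks_drop[OF ri(2)] by simp
      then show ?thesis using cases rks_full[OF ri(1)] U_rank by auto
    qed
    have "N \<in> Nts (G2 k G)"
    proof (cases "i = 0")
      case True then show ?thesis using cases by (auto simp: G2_def)
    next
      case False
      then have "Chain r i \<in> {Chain r i | r i. r \<in> Rules G \<and> 0 < i \<and> i < length (osf k G r)}"
        using ri(1,2) by blast
      then show ?thesis using False cases unfolding G2_def by simp
    qed
    then show "N \<in> Nts (G2 k G) \<and> set (nts \<alpha>) \<subseteq> Nts (G2 k G) \<and>
        kcorrect k (rk (G2 k G)) \<alpha> \<and> rk (G2 k G) N = trank (rk (G2 k G)) \<alpha> \<and>
        (\<forall>u\<in>set (leaf_tuples \<alpha>). tup_len u \<le> 1)"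
      using P dN rkN ri(3) by (auto simp: G2_def)
  qed
qed

lemma G2_rule: "(N, \<alpha>) \<in> Rules (G2 k G) \<Longrightarrow> \<exists>r i. r \<in> Rules G \<and> i < length (osf k G r) \<and>
   \<alpha> = opt (osf k G r ! i) (dst k G r i)"
  unfolding G2_def by auto

lemma G2_normal: "normal_form (G2 k G) \<and> linear_grammar (G2 k G)"
proof -
  have "normal_rule \<alpha> \<and> length (nts \<alpha>) \<le> 1" if a: "(N, \<alpha>) \<in> Rules (G2 k G)" for N \<alpha>
  proof -
    obtain r i where ri: "r \<in> Rules G" "i < length (osf k G r)" "\<alpha> = opt (osf k G r ! i) (dst k G r i)"
      using a G2_rule by blast
    have ok: "ok_op k (osf k G r ! i) (rk2 k G (dst k G r i))" using ok_at[OF ri(1,2)] rk2_dst[OF ri(1,2)] by simp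
    then show ?thesis using opt_props[of k "osf k G r ! i" "rk2 k G" "dst k G r i", OF ok] ri by simp
  qed
  then show ?thesis unfolding normal_form_def linear_grammar_def by auto
qed

end


context
  fixes k :: nat and G :: "('n, 't) dcfg"
  assumes kd: "is_kDCFG k G" and lin: "linear_grammar G"
begin

abbreviation "G' \<equiv> G2 k G"
abbreviation "os r \<equiv> osf k G r"

lemma head_in: "A \<in> Nts G \<Longrightarrow> (A, fst r) \<in> (U k G)\<^sup>* \<Longrightarrow> r \<in> Rules G \<Longrightarrow> os r \<noteq> [] \<Longrightarrow>
  (Orig A, opt (os r ! 0) (dst k G r 0)) \<in> Rules G'"
  unfolding G2_def by (cases r) auto

lemma chain_in: "r \<in> Rules G \<Longrightarrow> 0 < i \<Longrightarrow> i < length (os r) \<Longrightarrow>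
  (Chain r i, opt (os r ! i) (dst k G r i)) \<in> Rules G'"
  unfolding G2_def by (cases r) auto

lemma chain_gen:
  assumes r: "r \<in> Rules G" and ne: "os r \<noteq> []"
    and hx: "nts (snd r) \<noteq> [] \<Longrightarrow> gen G' (Orig (tg r)) x"
    and hA: "A' \<in> Nts G" "(A', fst r) \<in> (U k G)\<^sup>*"
  shows "gen G' (Orig A') (apps (os r) x)"
proof -
  define m where "m = length (os r)"
  have "gen G' (if i = 0 then Orig A' else Chain r i) (apps (drop i (os r)) x)" if "i < m" for i
    using that
  proof (induction "m - i" arbitrary: i)
    case 0 then show ?case by simp
  next
    case (Suc n)
    have im: "i < length (os r)" using Suc m_def by simp
    have rin: "(if i = 0 then Orig A' else Chain r i, opt (os r ! i) (dst k G r i)) \<in> Rules G'"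
      using head_in[OF hA r ne] chain_in[OF r _ im] by auto
    show ?case
    proof (cases "isBC (os r ! i)")
      case True
      note o = opt_BC[OF True, of "dst k G r i" "apps (drop (Suc i) (os r)) x"]
      show ?thesis using gen.g0[OF rin] o apps_drop[OF im] by simp
    next
      case False
      note o = opt_nonBC[OF False, of "dst k G r i" "apps (drop (Suc i) (os r)) x"]
      have "gen G' (dst k G r i) (apps (drop (Suc i) (os r)) x)"
      proof (cases "Suc i = m")
        case True
        have "nts (snd r) \<noteq> []" using ground_BC[OF kd lin r _ im] False True m_def by auto
        then show ?thesis using hx True by (simp add: dst_def m_def)
      next
        case False
        then have "Suc i < m" using Suc by simp
        then show ?thesis using Suc(1)[of "Suc i"] Suc(2) False by (simp add: dst_def m_def)
      qed
      moreover have e: "ev (opt (os r ! i) (dst k G r i)) (apps (drop (Suc i) (os r)) x) = apps (drop i (os r)) x"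
        using o apps_drop[OF im] by simp
      ultimately show ?thesis using gen.g1[OF rin conjunct1[OF o]] by metis
    qed
  qed
  from this[of 0] show ?thesis using ne by (simp add: m_def)
qed

lemma gen_to_G2: "gen G A w \<Longrightarrow> A' \<in> Nts G \<Longrightarrow> (A', A) \<in> (U k G)\<^sup>* \<Longrightarrow> gen G' (Orig A') w"
proof (induction arbitrary: A' rule: gen.induct)
  case (g0 A \<beta>)
  let ?r = "(A, \<beta>)"
  have ne: "os ?r \<noteq> []" and v: "apps (os ?r) undefined = val \<beta>"
    using good[OF kd lin g0(1)] g0(2) by (auto simp: good_ops_def)
  show ?case using chain_gen[OF g0(1) ne, of undefined A'] g0 v by auto
next
  case (g1 A \<beta> B x)
  let ?r = "(A, \<beta>)"
  have lx: "length x = rk G B + 1" using gen_len[OF kd lin g1(3)] .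
  have tg: "tg ?r = B" using g1(2) by (simp add: tg_def)
  have ev: "apps (os ?r) x = ev \<beta> x" using good[OF kd lin g1(1)] g1(2) lx tg
    by (auto simp: good_ops_def)
  show ?case
  proof (cases "os ?r = []")
    case True
    then have "(A, B) \<in> U k G" using g1(1,2) by (auto simp: U_def)
    then have "(A', B) \<in> (U k G)\<^sup>*" using g1(6) by simp
    then show ?thesis using g1(4)[OF g1(5)] ev True by simp
  next
    case False
    have BN: "B \<in> Nts G" using rule_props[OF kd lin g1(1)] g1(2) by auto
    have "gen G' (Orig B) x" using g1(4)[OF BN] by simp
    then show ?thesis using chain_gen[OF g1(1) False, of x A'] g1 tg ev by auto
  qed
qed

fun PP :: "('n, 't) nt2 \<Rightarrow> 't tuple \<Rightarrow> bool" where
  "PP (Orig A) w = gen G A w"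
| "PP (Chain r i) w = (\<exists>x. (nts (snd r) \<noteq> [] \<longrightarrow> gen G (tg r) x) \<and> w = apps (drop i (os r)) x)"

lemma G2_rule_cases:
  assumes "(N, \<alpha>) \<in> Rules G'"
  obtains r A where "r \<in> Rules G" "os r \<noteq> []" "N = Orig A" "A \<in> Nts G" "(A, fst r) \<in> (U k G)\<^sup>*"
      "\<alpha> = opt (os r ! 0) (dst k G r 0)"
  | r i where "r \<in> Rules G" "0 < i" "i < length (os r)" "N = Chain r i" "\<alpha> = opt (os r ! i) (dst k G r i)"
  using assms unfolding G2_def by auto

lemma head_sem:
  assumes r: "r \<in> Rules G" and ne: "os r \<noteq> []" and A: "(A, fst r) \<in> (U k G)\<^sup>*"
    and x: "nts (snd r) \<noteq> [] \<longrightarrow> gen G (tg r) x"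
  shows "gen G A (apps (os r) x)"
proof -
  obtain B \<beta> where rb: "r = (B, \<beta>)" by (cases r)
  have "gen G B (apps (os r) x)"
  proof (cases "nts \<beta>")
    case Nil
    then have "apps (os r) x = val \<beta>" using good[OF kd lin r] rb by (auto simp: good_ops_def)
    then show ?thesis using gen.g0[of B \<beta> G] r rb Nil by simp
  next
    case (Cons C l)
    then have nb: "nts \<beta> = [C]" using rule_props[OF kd lin r[unfolded rb]] by auto
    then have g: "gen G C x" using x rb by (simp add: tg_def)
    have "apps (os r) x = ev \<beta> x" using good[OF kd lin r] rb nb gen_len[OF kd lin g]
      by (auto simp: good_ops_def tg_def)
    then show ?thesis using gen.g1[of B \<beta> G C x] r rb nb g by simp
  qed
  then show ?thesis using U_gen[OF kd lin] A rb by auto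
qed

lemma G2_to_gen: "gen G' N w \<Longrightarrow> PP N w"
proof (induction rule: gen.induct)
  case (g0 N \<alpha>)
  from g0(1) show ?case
  proof (cases rule: G2_rule_cases)
    case (1 r A)
    have "isBC (os r ! 0)"
    proof (rule ccontr)
      assume nb: "\<not> isBC (os r ! 0)"
      show False using opt_nonBC[OF nb, of "dst k G r 0" undefined] g0(2) 1(6) by simp
    qed
    then have ng: "nts (snd r) = []" and m: "Suc 0 = length (os r)"
      using nonground_noBC[OF kd lin 1(1)] ground_BC[OF kd lin 1(1)] 1(2) by auto
    have "val \<alpha> = apps (os r) undefined"
      using opt_BC[OF \<open>isBC (os r ! 0)\<close>, of "dst k G r 0" undefined] 1 m apps_drop[of 0 "os r" undefined]
      by simp
    then show ?thesis using head_sem[OF 1(1,2,5)] ng 1 by simp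
  next
    case (2 r i)
    have bc: "isBC (os r ! i)"
    proof (rule ccontr)
      assume nb: "\<not> isBC (os r ! i)"
      show False using opt_nonBC[OF nb, of "dst k G r i" undefined] g0(2) 2(5) by simp
    qed
    then have ng: "nts (snd r) = []"
      using nonground_noBC[OF kd lin 2(1)] 2 by auto
    have "val \<alpha> = apps (drop i (os r)) undefined"
      using opt_BC[OF bc, of "dst k G r i" "apps (drop (Suc i) (os r)) undefined"] 2 apps_drop[of i "os r" undefined]
      by simp
    then show ?thesis using ng 2 by auto
  qed
next
  case (g1 N \<alpha> M y)
  from g1(1) obtain r i where ri: "r \<in> Rules G" "i < length (os r)" "\<alpha> = opt (os r ! i) (dst k G r i)"
    and cs: "(i = 0 \<and> os r \<noteq> [] \<and> (\<exists>A. N = Orig A \<and> A \<in> Nts G \<and> (A, fst r) \<in> (U k G)\<^sup>*)) \<or>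
             (0 < i \<and> N = Chain r i)"
    by (cases rule: G2_rule_cases) auto
  have nbc: "\<not> isBC (os r ! i)"
  proof
    assume nb: "isBC (os r ! i)"
    show False using opt_BC[OF nb, of "dst k G r i" undefined] g1(2) ri(3) by simp
  qed
  have M: "M = dst k G r i" and evy: "ev \<alpha> y = app_op (os r ! i) y"
    using opt_nonBC[OF nbc, of "dst k G r i" y] g1(2) ri by auto
  obtain x where x: "nts (snd r) \<noteq> [] \<longrightarrow> gen G (tg r) x" "y = apps (drop (Suc i) (os r)) x"
  proof (cases "Suc i = length (os r)")
    case True
    then show ?thesis using that[of y] g1(4) M by (simp add: dst_def)
  next
    case False
    then show ?thesis using that g1(4) M by (auto simp: dst_def)
  qed
  have w: "ev \<alpha> y = apps (drop i (os r)) x" using evy x(2) apps_drop[OF ri(2)] by simp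
  show ?case
  proof (cases "i = 0")
    case True
    then obtain A where A: "N = Orig A" "(A, fst r) \<in> (U k G)\<^sup>*" "os r \<noteq> []" using cs by auto
    then show ?thesis using head_sem[OF ri(1) A(3,2) x(1)] w True by simp
  next
    case False
    then show ?thesis using cs w x(1) by auto
  qed
qed

lemma G2_lang: "lang G' = lang G"
proof -
  have l2: "linear_grammar G'" using G2_normal[OF kd lin] by simp
  have S: "Start G \<in> Nts G" using kd by (simp add: is_kDCFG_def)
  have "gen G' (Orig (Start G)) w \<longleftrightarrow> gen G (Start G) w" for w
    using G2_to_gen[of "Orig (Start G)" w] gen_to_G2[of "Start G" w "Start G"] S by auto
  moreover have "Start G' = Orig (Start G)" by (simp add: G2_def)
  ultimately show ?thesis unfolding lang_def gen_LG[OF l2] gen_LG[OF lin] by auto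
qed

end


definition ren :: "('a \<Rightarrow> 'b) \<Rightarrow> ('a, 't) dcfg \<Rightarrow> ('b, 't) dcfg" where
  "ren f G = \<lparr> Nts = f ` Nts G, rk = (\<lambda>B. rk G (inv_into (Nts G) f B)),
     Rules = (\<lambda>(A, \<alpha>). (f A, map_tm f id \<alpha>)) ` Rules G, Start = f (Start G) \<rparr>"

lemma map_nts: "nts (map_tm f id \<alpha>) = map f (nts \<alpha>)"
  by (induction \<alpha>) auto

lemma map_leaf: "leaf_tuples (map_tm f id \<alpha>) = leaf_tuples \<alpha>"
  by (induction \<alpha>) (auto simp: list.map_id)

lemma map_ev: "ev (map_tm f id \<alpha>) x = ev \<alpha> x"
  by (induction \<alpha>) (auto simp: list.map_id)

lemma map_val: "val (map_tm f id \<alpha>) = val \<alpha>"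
  by (induction \<alpha>) (auto simp: list.map_id)

lemma map_trank: "\<forall>B\<in>set (nts \<alpha>). rh' (f B) = rh B \<Longrightarrow> trank rh' (map_tm f id \<alpha>) = trank rh \<alpha>"
  by (induction \<alpha>) (auto simp: list.map_id ball_Un)

lemma map_kc: "\<forall>B\<in>set (nts \<alpha>). rh' (f B) = rh B \<Longrightarrow> kcorrect k rh' (map_tm f id \<alpha>) = kcorrect k rh \<alpha>"
proof (induction \<alpha>)
  case (Conc a b)
  then show ?case using map_trank[of a rh' f rh] map_trank[of b rh' f rh] by (auto simp: ball_Un id_def)
next
  case (Interc j a b)
  then show ?case using map_trank[of a rh' f rh] map_trank[of b rh' f rh] by (auto simp: ball_Un id_def)
qed (auto simp: list.map_id)

lemma map_normal: "normal_rule \<alpha> \<Longrightarrow> normal_rule (map_tm f id \<alpha>)"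
  by (auto simp: normal_rule_def list.map_id)

context
  fixes k :: nat and G :: "('a, 't) dcfg" and f :: "'a \<Rightarrow> 'b"
  assumes kd: "is_kDCFG k G" and inj: "inj_on f (Nts G)"
begin

lemma rk_ren: "A \<in> Nts G \<Longrightarrow> rk (ren f G) (f A) = rk G A"
  using inj by (simp add: ren_def inv_into_f_f)

lemma rp: "(A, \<alpha>) \<in> Rules G \<Longrightarrow> A \<in> Nts G \<and> set (nts \<alpha>) \<subseteq> Nts G \<and> kcorrect k (rk G) \<alpha> \<and>
        rk G A = trank (rk G) \<alpha> \<and> (\<forall>u \<in> set (leaf_tuples \<alpha>). tup_len u \<le> 1)"
  using kd by (auto simp: is_kDCFG_def)

lemma ren_kDCFG: "is_kDCFG k (ren f G)"
proof -
  have "\<forall>(A, \<alpha>)\<in>Rules (ren f G). A \<in> Nts (ren f G) \<and> set (nts \<alpha>) \<subseteq> Nts (ren f G) \<and>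
        kcorrect k (rk (ren f G)) \<alpha> \<and> rk (ren f G) A = trank (rk (ren f G)) \<alpha> \<and>
        (\<forall>u\<in>set (leaf_tuples \<alpha>). tup_len u \<le> 1)"
  proof (clarify)
    fix N \<alpha>' assume "(N, \<alpha>') \<in> Rules (ren f G)"
    then obtain A \<alpha> where a: "(A, \<alpha>) \<in> Rules G" "N = f A" "\<alpha>' = map_tm f id \<alpha>"
      by (auto simp: ren_def)
    note p = rp[OF a(1)]
    have e: "\<forall>B\<in>set (nts \<alpha>). rk (ren f G) (f B) = rk G B" using p rk_ren by auto
    show "N \<in> Nts (ren f G) \<and> set (nts \<alpha>') \<subseteq> Nts (ren f G) \<and>
        kcorrect k (rk (ren f G)) \<alpha>' \<and> rk (ren f G) N = trank (rk (ren f G)) \<alpha>' \<and>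
        (\<forall>u\<in>set (leaf_tuples \<alpha>'). tup_len u \<le> 1)"
      using p a e map_kc[where rh'="rk (ren f G)" and rh="rk G" and f=f and k=k, OF e]
        map_trank[where rh'="rk (ren f G)" and rh="rk G" and f=f, OF e] rk_ren[of A]
      by (auto simp: ren_def map_nts map_leaf)
  qed
  moreover have "finite (Nts (ren f G))" "Start (ren f G) \<in> Nts (ren f G)" "finite (Rules (ren f G))"
    "rk (ren f G) (Start (ren f G)) = 0"
    using kd rk_ren[of "Start G"] by (auto simp: is_kDCFG_def ren_def)
  ultimately show ?thesis unfolding is_kDCFG_def by blast
qed

lemma ren_normal: "normal_form G \<Longrightarrow> normal_form (ren f G)"
  by (auto simp: normal_form_def ren_def map_normal)

lemma ren_linear: "linear_grammar G \<Longrightarrow> linear_grammar (ren f G)"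
  by (auto simp: linear_grammar_def ren_def map_nts)

lemma gen_ren1: "gen G A w \<Longrightarrow> gen (ren f G) (f A) w"
proof (induction rule: gen.induct)
  case (g0 A \<beta>)
  have "(f A, map_tm f id \<beta>) \<in> Rules (ren f G)" using g0 by (force simp: ren_def)
  then show ?case using gen.g0[of "f A" "map_tm f id \<beta>"] g0 by (simp add: map_nts map_val)
next
  case (g1 A \<beta> B x)
  have "(f A, map_tm f id \<beta>) \<in> Rules (ren f G)" using g1 by (force simp: ren_def)
  then show ?case using gen.g1[of "f A" "map_tm f id \<beta>" _ "f B" x] g1 by (simp add: map_nts map_ev)
qed

lemma gen_ren2: "gen (ren f G) N w \<Longrightarrow> \<forall>A\<in>Nts G. N = f A \<longrightarrow> gen G A w"
proof (induction rule: gen.induct)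
  case (g0 N \<alpha>')
  then obtain A0 \<alpha> where a: "(A0, \<alpha>) \<in> Rules G" "N = f A0" "\<alpha>' = map_tm f id \<alpha>"
    by (auto simp: ren_def)
  have "A0 \<in> Nts G" using rp[OF a(1)] by simp
  then show ?case using a g0(2) gen.g0[OF a(1)] inj by (auto simp: map_nts map_val inj_on_def)
next
  case (g1 N \<alpha>' M x)
  then obtain A0 \<alpha> where a: "(A0, \<alpha>) \<in> Rules G" "N = f A0" "\<alpha>' = map_tm f id \<alpha>"
    by (auto simp: ren_def)
  have A0: "A0 \<in> Nts G" using rp[OF a(1)] by simp
  obtain B where B: "nts \<alpha> = [B]" "M = f B" using g1(2) a(3) by (auto simp: map_nts)
  have "B \<in> Nts G" using rp[OF a(1)] B by simp
  then have "gen G B x" using g1(4) B by simp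
  then show ?case using a A0 gen.g1[OF a(1) B(1)] inj by (auto simp: map_ev inj_on_def)
qed

lemma ren_lang: "linear_grammar G \<Longrightarrow> lang (ren f G) = lang G"
proof -
  assume lin: "linear_grammar G"
  have S: "Start G \<in> Nts G" using kd by (simp add: is_kDCFG_def)
  have "gen (ren f G) (f (Start G)) w \<longleftrightarrow> gen G (Start G) w" for w
    using gen_ren1 gen_ren2 S by blast
  moreover have "Start (ren f G) = f (Start G)" by (simp add: ren_def)
  ultimately show ?thesis
    unfolding lang_def gen_LG[OF lin] gen_LG[OF ren_linear[OF lin]] by auto
qed

end

theorem lemma1:
  fixes k :: nat and G :: "('n, 't::finite) dcfg"
  assumes "is_kDCFG k G" and "linear_grammar G"
  shows "\<exists>G' :: (nat, 't) dcfg. is_kDCFG k G' \<and> normal_form G' \<and> lang G' = lang G"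
proof -
  let ?H = "G2 k G"
  have kH: "is_kDCFG k ?H" using G2_kDCFG[OF assms] .
  have nH: "normal_form ?H" and lH: "linear_grammar ?H" using G2_normal[OF assms] by auto
  have LH: "lang ?H = lang G" using G2_lang[OF assms] .
  have "finite (Nts ?H)" using kH by (simp add: is_kDCFG_def)
  then obtain f :: "_ \<Rightarrow> nat" and n where f: "inj_on f (Nts ?H)"
    using finite_imp_inj_to_nat_seg by blast
  show ?thesis
    apply (rule exI[of _ "ren f ?H"])
    using ren_kDCFG[OF kH f] ren_normal[OF kH f nH] ren_lang[OF kH f lH] LH by simp
qed

end
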